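(* Let $\gamma>0$, let $\mathscr U\subset\mathbb{T}^2\times(0,T)$ be open and $p:\mathscr U\to\mathbb{R}$ continuous and bounded. Then the map $(x,t)\mapsto K_{\gamma,(x,t)}$ is continuous on $\mathscr U$ with respect to the Hausdorff metric, and $\bigcup_{(x,t)\in\mathscr U}K_{\gamma,(x,t)}$ is bounded.
   Context: $\mathcal S_0^{2\times2}$ is the space of traceless symmetric $2\times2$ matrices, $Z:=\mathbb{R}^2\times\mathbb{R}^2\times\mathcal S_0^{2\times2}\times\mathbb{R}$ with elements $(v,m,\sigma,e)$ and Euclidean metric; $K_{\gamma,(x,t)}:=\{z\in Z: v\otimes v-\sigma=e\,\mathrm{Id},\ m=(e+p(x,t))v,\ e\le\gamma\}$. *)

theory Defs
  imports "HOL-Analysis.Analysis"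
begin

text \<open>The space Z = R^2 x R^2 x S_0^{2x2} x R is realised inside the Euclidean
  space (real^2) x (real^2) x (real^2^2) x real (product metric = Euclidean,
  matrices with the Frobenius norm); S_0 is the subspace of traceless
  symmetric matrices.\<close>

type_synonym zpt = "(real^2) \<times> (real^2) \<times> (real^2^2) \<times> real"

definition S0 :: "(real^2^2) set" where
  "S0 = {\<sigma>. transpose \<sigma> = \<sigma> \<and> \<sigma>$1$1 + \<sigma>$2$2 = 0}"

definition outer :: "real^2 \<Rightarrow> real^2 \<Rightarrow> real^2^2" where
  "outer v w = (\<chi> i j. v$i * w$j)"

definition Kset :: "real \<Rightarrow> ((real^2) \<times> real \<Rightarrow> real) \<Rightarrow> (real^2) \<times> real \<Rightarrow> zpt set" where
  "Kset \<gamma> p y = {(v, m, \<sigma>, e). \<sigma> \<in> S0 \<and> outer v v - \<sigma> = e *\<^sub>R mat 1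
        \<and> m = (e + p y) *\<^sub>R v \<and> e \<le> \<gamma>}"

text \<open>Hausdorff distance (meaningful for nonempty bounded sets).\<close>
definition hausdist :: "'a::metric_space set \<Rightarrow> 'a set \<Rightarrow> real" where
  "hausdist A B = max (SUP a\<in>A. infdist a B) (SUP b\<in>B. infdist b A)"

end

theory Submission
  imports Defs
begin

lemma K_facts:
  assumes "(v,m,\<sigma>,e) \<in> Kset \<gamma> p y"
  shows "(norm v)^2 = 2*e" "e \<le> \<gamma>" "m = (e + p y) *\<^sub>R v"
        "\<sigma> = outer v v - e *\<^sub>R mat 1" "0 \<le> e"
proof -
  from assms have S: "\<sigma> \<in> S0" and eq: "outer v v - \<sigma> = e *\<^sub>R mat 1"
    and m: "m = (e + p y) *\<^sub>R v" and g: "e \<le> \<gamma>"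
    unfolding Kset_def by auto
  have h1: "(outer v v - \<sigma>)$1$1 = (e *\<^sub>R mat 1 :: real^2^2)$1$1" using eq by simp
  hence a1: "(v$1)*(v$1) - \<sigma>$1$1 = e" by (simp add: outer_def mat_def)
  have h2: "(outer v v - \<sigma>)$2$2 = (e *\<^sub>R mat 1 :: real^2^2)$2$2" using eq by simp
  hence a2: "(v$2)*(v$2) - \<sigma>$2$2 = e" by (simp add: outer_def mat_def)
  from S have "\<sigma>$1$1 + \<sigma>$2$2 = 0" by (simp add: S0_def)
  moreover have "(norm v)^2 = (v$1)*(v$1) + (v$2)*(v$2)"
    by (simp add: power2_norm_eq_inner inner_vec_def sum_2)
  ultimately show n: "(norm v)^2 = 2*e" using a1 a2 by linarith
  show "e \<le> \<gamma>" "m = (e + p y) *\<^sub>R v" using g m by auto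
  show "\<sigma> = outer v v - e *\<^sub>R mat 1" using eq by (simp add: algebra_simps)
  show "0 \<le> e" using n by (smt (verit) zero_le_power2)
qed

lemma K_norm_v:
  assumes "(v,m,\<sigma>,e) \<in> Kset \<gamma> p y"
  shows "norm v \<le> sqrt (2*\<gamma>)"
proof -
  have "(norm v)^2 \<le> 2*\<gamma>" using K_facts[OF assms] by linarith
  thus ?thesis by (simp add: real_le_rsqrt)
qed

lemma K_nonempty:
  assumes "0 \<le> \<gamma>"
  shows "(0,0,0,0) \<in> Kset \<gamma> p y"
  using assms by (simp add: Kset_def S0_def outer_def transpose_def vec_eq_iff)

lemma K_onesided:
  assumes "a \<in> Kset \<gamma> p y'"
  shows "infdist a (Kset \<gamma> p y) \<le> \<bar>p y' - p y\<bar> * sqrt (2*\<gamma>)"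
proof -
  obtain v m \<sigma> e where a: "a = (v,m,\<sigma>,e)" by (cases a) auto
  have mem: "(v,m,\<sigma>,e) \<in> Kset \<gamma> p y'" using assms a by simp
  have b: "(v, (e + p y) *\<^sub>R v, \<sigma>, e) \<in> Kset \<gamma> p y"
    using mem unfolding Kset_def by auto
  have "infdist a (Kset \<gamma> p y) \<le> dist a (v, (e + p y) *\<^sub>R v, \<sigma>, e)"
    using b by (rule infdist_le)
  also have "\<dots> = dist m ((e + p y) *\<^sub>R v)"
    using a by (simp add: dist_Pair_Pair)
  also have "\<dots> = norm ((p y' - p y) *\<^sub>R v)"
    using K_facts(3)[OF mem] by (simp add: dist_norm algebra_simps)
  also have "\<dots> = \<bar>p y' - p y\<bar> * norm v" by simp
  also have "\<dots> \<le> \<bar>p y' - p y\<bar> * sqrt (2*\<gamma>)"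
    using K_norm_v[OF mem] by (simp add: mult_left_mono)
  finally show ?thesis .
qed

lemma K_haus:
  assumes "0 \<le> \<gamma>"
  shows "hausdist (Kset \<gamma> p y') (Kset \<gamma> p y) \<le> \<bar>p y' - p y\<bar> * sqrt (2*\<gamma>)"
proof -
  have 1: "(SUP a\<in>Kset \<gamma> p y'. infdist a (Kset \<gamma> p y)) \<le> \<bar>p y' - p y\<bar> * sqrt (2*\<gamma>)"
    using K_nonempty[OF assms, of p y'] K_onesided by (intro cSUP_least) auto
  have 2: "(SUP a\<in>Kset \<gamma> p y. infdist a (Kset \<gamma> p y')) \<le> \<bar>p y' - p y\<bar> * sqrt (2*\<gamma>)"
    using K_nonempty[OF assms, of p y] K_onesided[of _ \<gamma> p y y'] by (intro cSUP_least) (auto simp: abs_minus_commute)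
  show ?thesis using 1 2 unfolding hausdist_def by simp
qed

lemma K_bound:
  assumes "(v,m,\<sigma>,e) \<in> Kset \<gamma> p y" "\<bar>p y\<bar> \<le> P"
  shows "norm (v,m,\<sigma>,e) \<le> sqrt (2*\<gamma>) + (\<gamma> + P) * sqrt (2*\<gamma>) + 4 * (2*\<gamma> + \<gamma>) + \<gamma>"
proof -
  note F = K_facts[OF assms(1)]
  have nv: "norm v \<le> sqrt (2*\<gamma>)" by (rule K_norm_v[OF assms(1)])
  have "norm m = \<bar>e + p y\<bar> * norm v" using F(3) by simp
  also have "\<dots> \<le> (\<gamma> + P) * sqrt (2*\<gamma>)"
    using F(2) F(5) assms(2) nv by (intro mult_mono) auto
  finally have nm: "norm m \<le> (\<gamma> + P) * sqrt (2*\<gamma>)" .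
  have ent: "\<bar>\<sigma>$i$j\<bar> \<le> 2*\<gamma> + \<gamma>" for i j
  proof -
    have "\<sigma>$i$j = v$i * v$j - (if i = j then e else 0)"
      using F(4) by (simp add: outer_def mat_def)
    hence "\<bar>\<sigma>$i$j\<bar> \<le> \<bar>v$i\<bar> * \<bar>v$j\<bar> + e" using F(5) by (cases "i = j") (auto simp: abs_mult abs_le_iff)
    also have "\<dots> \<le> norm v * norm v + \<gamma>"
      using F(2) by (intro add_mono mult_mono component_le_norm_cart) auto
    also have "norm v * norm v = 2*e" using F(1) by (simp add: power2_eq_square)
    finally show ?thesis using F(2) by linarith
  qed
  have row: "norm (\<sigma>$i) \<le> 2 * (2*\<gamma> + \<gamma>)" for i
  proof -
    have "norm (\<sigma>$i) \<le> (\<Sum>j\<in>UNIV. \<bar>\<sigma>$i$j\<bar>)" by (rule norm_le_l1_cart)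
    also have "\<dots> \<le> 2 * (2*\<gamma> + \<gamma>)" using ent[of i 1] ent[of i 2] by (simp add: sum_2)
    finally show ?thesis .
  qed
  have ns: "norm \<sigma> \<le> 4 * (2*\<gamma> + \<gamma>)"
  proof -
    have "norm \<sigma> \<le> (\<Sum>i\<in>UNIV. norm (\<sigma>$i))"
      unfolding norm_vec_def by (rule L2_set_le_sum) simp
    also have "\<dots> \<le> 4 * (2*\<gamma> + \<gamma>)" using row[of 1] row[of 2] by (simp add: sum_2)
    finally show ?thesis .
  qed
  have ne: "norm e \<le> \<gamma>" using F(2) F(5) by simp
  have "norm (v,m,\<sigma>,e) \<le> norm v + (norm m + (norm \<sigma> + norm e))"
    by (meson add_left_mono norm_Pair_le order_trans)
  thus ?thesis using nv nm ns ne by linarith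
qed

theorem lemma2p12:
  fixes \<gamma> T :: real and U :: "((real^2) \<times> real) set" and p :: "(real^2) \<times> real \<Rightarrow> real"
  assumes "\<gamma> > 0"
    and "open U"
    and "U \<subseteq> {(x, t). 0 < t \<and> t < T}"
    and "\<And>x t k. (x, t) \<in> U \<Longrightarrow> (\<forall>i. k $ i \<in> \<int>) \<Longrightarrow> (x + k, t) \<in> U \<and> p (x + k, t) = p (x, t)"
    and "continuous_on U p"
    and "bounded (p ` U)"
  shows "(\<forall>y\<in>U. \<forall>\<epsilon>>0. \<exists>\<delta>>0. \<forall>y'\<in>U. dist y' y < \<delta> \<longrightarrow>
            hausdist (Kset \<gamma> p y') (Kset \<gamma> p y) < \<epsilon>)
         \<and> bounded (\<Union>y\<in>U. Kset \<gamma> p y)"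
proof
  show "\<forall>y\<in>U. \<forall>\<epsilon>>0. \<exists>\<delta>>0. \<forall>y'\<in>U. dist y' y < \<delta> \<longrightarrow>
            hausdist (Kset \<gamma> p y') (Kset \<gamma> p y) < \<epsilon>"
  proof (intro ballI allI impI)
    fix y and \<epsilon> :: real assume "y \<in> U" "\<epsilon> > 0"
    define R where "R = sqrt (2*\<gamma>)"
    have R0: "R \<ge> 0" using assms(1) by (simp add: R_def)
    have "\<epsilon> / (R + 1) > 0" using \<open>\<epsilon> > 0\<close> R0 by simp
    then obtain \<delta> where d: "\<delta> > 0" "\<forall>y'\<in>U. dist y' y < \<delta> \<longrightarrow> dist (p y') (p y) < \<epsilon> / (R + 1)"
      using assms(5) \<open>y \<in> U\<close> unfolding continuous_on_iff by blast
    show "\<exists>\<delta>>0. \<forall>y'\<in>U. dist y' y < \<delta> \<longrightarrow> hausdist (Kset \<gamma> p y') (Kset \<gamma> p y) < \<epsilon>"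
    proof (intro exI conjI ballI impI)
      fix y' assume "y' \<in> U" "dist y' y < \<delta>"
      hence lt: "\<bar>p y' - p y\<bar> < \<epsilon> / (R + 1)" using d by (simp add: dist_real_def)
      have "hausdist (Kset \<gamma> p y') (Kset \<gamma> p y) \<le> \<bar>p y' - p y\<bar> * R"
        using K_haus assms(1) R_def by simp
      also have "\<dots> \<le> \<bar>p y' - p y\<bar> * (R + 1)" by (simp add: mult_left_mono)
      also have "\<dots> < \<epsilon>" using lt R0 by (simp add: field_simps)
      finally show "hausdist (Kset \<gamma> p y') (Kset \<gamma> p y) < \<epsilon>" .
    qed (rule d(1))
  qed
  obtain P where P: "\<And>y. y \<in> U \<Longrightarrow> \<bar>p y\<bar> \<le> P"
    using assms(6) unfolding bounded_iff by (auto simp: real_norm_def)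
  show "bounded (\<Union>y\<in>U. Kset \<gamma> p y)"
    unfolding bounded_iff
  proof (intro exI ballI)
    fix z assume "z \<in> (\<Union>y\<in>U. Kset \<gamma> p y)"
    then obtain y where y: "y \<in> U" "z \<in> Kset \<gamma> p y" by blast
    obtain v m \<sigma> e where z: "z = (v,m,\<sigma>,e)" by (cases z) auto
    show "norm z \<le> sqrt (2*\<gamma>) + (\<gamma> + P) * sqrt (2*\<gamma>) + 4 * (2*\<gamma> + \<gamma>) + \<gamma>"
      using K_bound[of v m \<sigma> e \<gamma> p y P] y z P by simp
  qed
qed

end
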